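(* Let $n\in\mathbb{N}$. Then: (i) the number of distinct nilpotent semigroups of degree $3$ on the set $\{1,2,\ldots,n\}$ (i.e. the number of associative multiplications on this set making it a nilpotent semigroup of degree $3$) is \[ \sum_{m=2}^{a(n)}\binom{n}{m}\, m\sum_{i=0}^{m-1}(-1)^i\binom{m-1}{i}(m-i)^{\left((n-m)^2\right)},\qquad a(n)=\left\lfloor n+\tfrac12-\sqrt{n-\tfrac34}\,\right\rfloor; \] (ii) the number of distinct commutative nilpotent semigroups of degree $3$ on $\{1,2,\ldots,n\}$ is \[ \sum_{m=2}^{c(n)}\binom{n}{m}\, m\sum_{i=0}^{m-1}(-1)^i\binom{m-1}{i}(m-i)^{(n-m)(n-m+1)/2},\qquad c(n)=\left\lfloor n+\tfrac32-\sqrt{2n+\tfrac14}\,\right\rfloor. \] (Empty sums are $0$.)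
   Context: For a semigroup $S$ and $r\in\mathbb{N}$ let $S^r=\{s_1s_2\cdots s_r : s_1,\ldots,s_r\in S\}$. A semigroup $S$ is nilpotent if $|S^r|=1$ for some $r\in\mathbb{N}$, and it has (nilpotency) degree $r$ if $r$ is the least such number. Thus $S$ is nilpotent of degree $3$ iff $S$ has a zero, every product of three elements equals the zero, and some product of two elements is non-zero. Counting "on a set" means counting distinct multiplication tables (up to equality). *)

theory Defs
  imports "HOL-Analysis.Analysis" "HOL-Library.FuncSet"
begin

definition semigroup_on :: "'a set \<Rightarrow> ('a \<Rightarrow> 'a \<Rightarrow> 'a) \<Rightarrow> bool" where
  "semigroup_on A f \<longleftrightarrow> (\<forall>x\<in>A. \<forall>y\<in>A. f x y \<in> A) \<and>
     (\<forall>x\<in>A. \<forall>y\<in>A. \<forall>z\<in>A. f (f x y) z = f x (f y z))"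

text \<open>S^r = {s_1 s_2 ... s_r}, products bracketed from the left (well-defined by associativity).\<close>
definition power_set_sg :: "'a set \<Rightarrow> ('a \<Rightarrow> 'a \<Rightarrow> 'a) \<Rightarrow> nat \<Rightarrow> 'a set" where
  "power_set_sg A f r = {foldl f (hd xs) (tl xs) | xs. length xs = r \<and> set xs \<subseteq> A}"

definition nilpotent_degree :: "'a set \<Rightarrow> ('a \<Rightarrow> 'a \<Rightarrow> 'a) \<Rightarrow> nat \<Rightarrow> bool" where
  "nilpotent_degree A f r \<longleftrightarrow> semigroup_on A f \<and> r \<ge> 1 \<and>
     card (power_set_sg A f r) = 1 \<and> (\<forall>k. 1 \<le> k \<and> k < r \<longrightarrow> card (power_set_sg A f k) \<noteq> 1)"

definition commutative_on :: "'a set \<Rightarrow> ('a \<Rightarrow> 'a \<Rightarrow> 'a) \<Rightarrow> bool" where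
  "commutative_on A f \<longleftrightarrow> (\<forall>x\<in>A. \<forall>y\<in>A. f x y = f y x)"

text \<open>Multiplication tables on {1..n}: functions {1..n} \<rightarrow> {1..n} \<rightarrow> {1..n}, extensional
  (undefined outside), so distinct tables correspond to distinct elements.\<close>
definition tables :: "nat \<Rightarrow> (nat \<Rightarrow> nat \<Rightarrow> nat) set" where
  "tables n = {1..n} \<rightarrow>\<^sub>E ({1..n} \<rightarrow>\<^sub>E {1..n})"

definition a_bound :: "nat \<Rightarrow> int" where
  "a_bound n = \<lfloor>real n + 1/2 - sqrt (real n - 3/4)\<rfloor>"

definition c_bound :: "nat \<Rightarrow> int" where
  "c_bound n = \<lfloor>real n + 3/2 - sqrt (2 * real n + 1/4)\<rfloor>"

end

theory Submission imports Defs begin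

definition Phi :: "int \<Rightarrow> nat \<Rightarrow> nat \<Rightarrow> int" where
  "Phi M q k = (\<Sum>i\<le>q. (-1)^i * int (q choose i) * (M - int i)^k)"

lemma Phi_Suc: "Phi M (Suc q) k = Phi M q k - Phi (M - 1) q k"
proof -
  have e1: "Phi M q k = (\<Sum>i\<le>Suc q. (-1)^i * int (q choose i) * (M - int i)^k)"
    unfolding Phi_def by simp
  have e2: "(\<Sum>i\<le>Suc q. (-1)^i * int (q choose i) * (M - int i)^k)
      = M^k + (\<Sum>i\<le>q. (-1)^(Suc i) * int (q choose Suc i) * (M - int (Suc i))^k)"
    by (subst sum.atMost_Suc_shift) simp
  have e3: "Phi M (Suc q) k = M^k + (\<Sum>i\<le>q. (-1)^(Suc i) * int (Suc q choose Suc i) * (M - int (Suc i))^k)"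
    unfolding Phi_def by (subst sum.atMost_Suc_shift) simp
  have e4: "(\<Sum>i\<le>q. (-1)^(Suc i) * int (Suc q choose Suc i) * (M - int (Suc i))^k)
     = (\<Sum>i\<le>q. (-1)^(Suc i) * int (q choose Suc i) * (M - int (Suc i))^k)
       - (\<Sum>i\<le>q. (-1)^i * int (q choose i) * ((M - 1) - int i)^k)"
    by (subst sum_subtractf[symmetric], rule sum.cong) (simp_all add: algebra_simps)
  show ?thesis unfolding e3 e4 e1 e2 Phi_def[of "M - 1" q k] by simp
qed

lemma count_cover:
  assumes "finite Q"
  shows "finite X \<Longrightarrow> finite B \<Longrightarrow> Q \<subseteq> B \<Longrightarrow>
    int (card {g \<in> X \<rightarrow>\<^sub>E B. Q \<subseteq> g ` X}) = Phi (int (card B)) (card Q) (card X)"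
  using assms
proof (induction Q arbitrary: B rule: finite_induct)
  case empty
  then show ?case by (simp add: Phi_def card_PiE)
next
  case (insert b Q)
  define S1 where "S1 = {g \<in> X \<rightarrow>\<^sub>E B. Q \<subseteq> g ` X}"
  define S2 where "S2 = {g \<in> X \<rightarrow>\<^sub>E (B - {b}). Q \<subseteq> g ` X}"
  have sub: "S2 \<subseteq> S1" unfolding S1_def S2_def by (auto simp: PiE_def Pi_def)
  have eq: "{g \<in> X \<rightarrow>\<^sub>E B. insert b Q \<subseteq> g ` X} = S1 - S2"
    unfolding S1_def S2_def by (auto simp: PiE_def Pi_def)
  have fin0: "finite (X \<rightarrow>\<^sub>E B)" using insert.prems by (simp add: finite_PiE)
  have fin: "finite S1" unfolding S1_def by (rule finite_subset[OF _ fin0]) auto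
  have c1: "int (card S1) = Phi (int (card B)) (card Q) (card X)"
    unfolding S1_def using insert.IH[of B] insert.prems by simp
  have c2: "int (card S2) = Phi (int (card (B - {b}))) (card Q) (card X)"
    unfolding S2_def using insert.IH[of "B - {b}"] insert.prems insert.hyps by auto
  have cb: "int (card (B - {b})) = int (card B) - 1"
  proof -
    have "card B > 0" using insert.prems by (auto simp: card_gt_0_iff)
    then show ?thesis using insert.prems by (simp add: of_nat_diff)
  qed
  have "int (card (S1 - S2)) = int (card S1) - int (card S2)"
  proof -
    have "finite S2" using sub fin by (rule finite_subset)
    then show ?thesis using sub fin by (simp add: card_Diff_subset card_mono of_nat_diff)
  qed
  have "card (insert b Q) = Suc (card Q)" using insert.hyps by simp
  then show ?case using eq c1 c2 cb \<open>int (card (S1 - S2)) = int (card S1) - int (card S2)\<close> by (simp only: Phi_Suc)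
qed


definition image2 :: "('a \<Rightarrow> 'a \<Rightarrow> 'a) \<Rightarrow> 'a set \<Rightarrow> 'a set" where
  "image2 f A = (\<lambda>p. f (fst p) (snd p)) ` (A \<times> A)"

lemma ps1: "power_set_sg A f (Suc 0) = A"
  unfolding power_set_sg_def
  apply (auto simp: length_Suc_conv)
  subgoal for x apply (rule exI[where x="[x]"]) by auto
  done

lemma ps2: "power_set_sg A f 2 = image2 f A"
proof
  show "power_set_sg A f 2 \<subseteq> image2 f A"
    unfolding power_set_sg_def image2_def by (auto simp: length_Suc_conv numeral_2_eq_2) (metis (no_types, lifting) SigmaI fst_conv image_eqI snd_conv)
  show "image2 f A \<subseteq> power_set_sg A f 2"
  proof
    fix v assume "v \<in> image2 f A"
    then obtain x y where "x \<in> A" "y \<in> A" "v = f x y" unfolding image2_def by auto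
    then show "v \<in> power_set_sg A f 2" unfolding power_set_sg_def
      by (intro CollectI exI[where x="[x,y]"]) auto
  qed
qed

lemma ps3: "power_set_sg A f 3 = {f (f x y) w | x y w. x \<in> A \<and> y \<in> A \<and> w \<in> A}"
proof
  show "power_set_sg A f 3 \<subseteq> {f (f x y) w | x y w. x \<in> A \<and> y \<in> A \<and> w \<in> A}"
    unfolding power_set_sg_def by (auto simp: length_Suc_conv numeral_3_eq_3) blast
  show "{f (f x y) w | x y w. x \<in> A \<and> y \<in> A \<and> w \<in> A} \<subseteq> power_set_sg A f 3"
  proof
    fix v assume "v \<in> {f (f x y) w | x y w. x \<in> A \<and> y \<in> A \<and> w \<in> A}"
    then obtain x y w where "x \<in> A" "y \<in> A" "w \<in> A" "v = f (f x y) w" by auto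
    then show "v \<in> power_set_sg A f 3" unfolding power_set_sg_def
      by (intro CollectI exI[where x="[x,y,w]"]) auto
  qed
qed

lemma tables_closed: "f \<in> tables n \<Longrightarrow> x \<in> {1..n} \<Longrightarrow> y \<in> {1..n} \<Longrightarrow> f x y \<in> {1..n}"
  unfolding tables_def by (auto simp: PiE_def Pi_def)

lemma image2_sub: "f \<in> tables n \<Longrightarrow> image2 f {1..n} \<subseteq> {1..n}"
  unfolding image2_def using tables_closed by fastforce

lemma char:
  assumes f: "f \<in> tables n"
  shows "nilpotent_degree {1..n} f 3 \<longleftrightarrow>
    2 \<le> card (image2 f {1..n}) \<and>
    (\<forall>b\<in>image2 f {1..n}. \<forall>w\<in>{1..n}. f b w = f (f 1 1) 1 \<and> f w b = f (f 1 1) 1)"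
    (is "?L \<longleftrightarrow> ?R")
proof
  let ?A = "{1..n::nat}"
  let ?z = "f (f 1 1) 1"
  assume L: ?L
  then have sg: "semigroup_on ?A f" and c3: "card (power_set_sg ?A f 3) = 1"
    and c2: "card (power_set_sg ?A f 2) \<noteq> 1"
    unfolding nilpotent_degree_def by auto
  obtain z where z: "power_set_sg ?A f 3 = {z}" using c3 card_1_singletonE by blast
  have "n \<ge> 1"
  proof (rule ccontr)
    assume "\<not> n \<ge> 1" then have "?A = {}" by auto
    then have "power_set_sg ?A f 3 = {}" by (simp add: ps3)
    then show False using z by simp
  qed
  then have one: "1 \<in> ?A" by auto
  have zall: "\<And>x y w. x \<in> ?A \<Longrightarrow> y \<in> ?A \<Longrightarrow> w \<in> ?A \<Longrightarrow> f (f x y) w = z"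
    using z unfolding ps3 by blast
  have zz: "?z = z" using zall one by blast
  have assoc: "\<And>x y w. x \<in> ?A \<Longrightarrow> y \<in> ?A \<Longrightarrow> w \<in> ?A \<Longrightarrow> f (f x y) w = f x (f y w)"
    using sg unfolding semigroup_on_def by blast
  have fin: "finite (image2 f ?A)" unfolding image2_def by simp
  have ne: "image2 f ?A \<noteq> {}" unfolding image2_def using one by auto
  have "card (image2 f ?A) \<noteq> 0" using fin ne by simp
  moreover have "card (image2 f ?A) \<noteq> 1" using c2 by (simp add: ps2)
  ultimately have "2 \<le> card (image2 f ?A)" by linarith
  moreover have "\<forall>b\<in>image2 f ?A. \<forall>w\<in>?A. f b w = ?z \<and> f w b = ?z"
  proof (intro ballI)
    fix b w assume b: "b \<in> image2 f ?A" and w: "w \<in> ?A"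
    then obtain x y where xy: "x \<in> ?A" "y \<in> ?A" "b = f x y" unfolding image2_def by auto
    have "f b w = z" using xy w zall by simp
    moreover have "f w b = z" using xy w zall assoc by metis
    ultimately show "f b w = ?z \<and> f w b = ?z" using zz by simp
  qed
  ultimately show ?R by blast
next
  let ?A = "{1..n::nat}"
  let ?z = "f (f 1 1) 1"
  assume R: ?R
  then have c2: "2 \<le> card (image2 f ?A)" and Z: "\<forall>b\<in>image2 f ?A. \<forall>w\<in>?A. f b w = ?z \<and> f w b = ?z"
    by auto
  have "card (image2 f ?A) \<le> card ?A" using image2_sub[OF f] by (intro card_mono) auto
  then have n2: "n \<ge> 2" using c2 by simp
  have inB: "\<And>x y. x \<in> ?A \<Longrightarrow> y \<in> ?A \<Longrightarrow> f x y \<in> image2 f ?A"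
    unfolding image2_def by force
  have sg: "semigroup_on ?A f"
    unfolding semigroup_on_def
  proof (intro conjI ballI)
    fix x y assume "x \<in> ?A" "y \<in> ?A" then show "f x y \<in> ?A" using tables_closed[OF f] by blast
  next
    fix x y w assume xyw: "x \<in> ?A" "y \<in> ?A" "w \<in> ?A"
    have "f (f x y) w = ?z" using Z inB xyw by blast
    moreover have "f x (f y w) = ?z" using Z inB xyw by blast
    ultimately show "f (f x y) w = f x (f y w)" by simp
  qed
  have p3: "power_set_sg ?A f 3 = {?z}"
  proof -
    have "power_set_sg ?A f 3 \<subseteq> {?z}" unfolding ps3 using Z inB by blast
    moreover have "f (f 1 1) 1 \<in> power_set_sg ?A f 3" unfolding ps3 using n2 by fastforce
    ultimately show ?thesis by blast
  qed
  have k: "\<forall>k. 1 \<le> k \<and> k < 3 \<longrightarrow> card (power_set_sg ?A f k) \<noteq> 1"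
  proof (intro allI impI)
    fix k :: nat assume "1 \<le> k \<and> k < 3"
    then have "k = 1 \<or> k = 2" by auto
    then show "card (power_set_sg ?A f k) \<noteq> 1"
      using c2 n2 by (auto simp: ps1 ps2)
  qed
  show ?L unfolding nilpotent_degree_def using sg p3 k by simp
qed


definition SS :: "nat set \<Rightarrow> nat set \<Rightarrow> nat \<Rightarrow> (nat \<Rightarrow> nat \<Rightarrow> nat) set" where
  "SS A B z = {f \<in> A \<rightarrow>\<^sub>E (A \<rightarrow>\<^sub>E A). image2 f A = B \<and> (\<forall>b\<in>B. \<forall>w\<in>A. f b w = z \<and> f w b = z)}"

lemma cardSS:
  assumes BA: "B \<subseteq> A" and z: "z \<in> B"
  shows "card (SS A B z) = card {g \<in> ((A-B)\<times>(A-B)) \<rightarrow>\<^sub>E B. B - {z} \<subseteq> g ` ((A-B)\<times>(A-B))}"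
proof -
  define C where "C = A - B"
  define D where "D = C \<times> C"
  define T where "T = {g \<in> D \<rightarrow>\<^sub>E B. B - {z} \<subseteq> g ` D}"
  define \<phi> where "\<phi> f = restrict (\<lambda>p. f (fst p) (snd p)) D" for f :: "nat \<Rightarrow> nat \<Rightarrow> nat"
  define \<psi> where "\<psi> g = (\<lambda>x\<in>A. \<lambda>y\<in>A. if x \<in> C \<and> y \<in> C then g (x,y) else z)" for g :: "nat \<times> nat \<Rightarrow> nat"
  have zA: "z \<in> A" using BA z by auto
  have "bij_betw \<phi> (SS A B z) T"
  proof (rule bij_betw_byWitness[where f'=\<psi>])
    show "\<forall>f\<in>SS A B z. \<psi> (\<phi> f) = f"
    proof
      fix f assume f: "f \<in> SS A B z"
      then have fP: "f \<in> A \<rightarrow>\<^sub>E (A \<rightarrow>\<^sub>E A)" and fz: "\<forall>b\<in>B. \<forall>w\<in>A. f b w = z \<and> f w b = z"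
        unfolding SS_def by auto
      show "\<psi> (\<phi> f) = f"
      proof (rule ext)
        fix x show "\<psi> (\<phi> f) x = f x"
        proof (cases "x \<in> A")
          case False
          have "f x = undefined" using fP False by (rule PiE_arb)
          then show ?thesis using False unfolding \<psi>_def by simp
        next
          case True
          then have fx: "f x \<in> A \<rightarrow>\<^sub>E A" using fP by auto
          show ?thesis
          proof (rule ext)
            fix y show "\<psi> (\<phi> f) x y = f x y"
            proof (cases "y \<in> A")
              case False
              have "f x y = undefined" using fx False by (rule PiE_arb)
              then show ?thesis using False True unfolding \<psi>_def by simp
            next
              case yA: True
              show ?thesis using True yA fz unfolding \<psi>_def \<phi>_def D_def C_def by auto
            qed
          qed
        qed
      qed
    qed
    show "\<forall>g\<in>T. \<phi> (\<psi> g) = g"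
    proof
      fix g assume "g \<in> T"
      then have gP: "g \<in> D \<rightarrow>\<^sub>E B" unfolding T_def by auto
      show "\<phi> (\<psi> g) = g"
      proof (rule ext)
        fix p show "\<phi> (\<psi> g) p = g p"
        proof (cases "p \<in> D")
          case False
          have "g p = undefined" using gP False by (rule PiE_arb)
          then show ?thesis using False unfolding \<phi>_def by simp
        next
          case True then show ?thesis unfolding \<phi>_def \<psi>_def D_def C_def by auto
        qed
      qed
    qed
    show "\<phi> ` SS A B z \<subseteq> T"
    proof
      fix h assume "h \<in> \<phi> ` SS A B z"
      then obtain f where f: "f \<in> SS A B z" and h: "h = \<phi> f" by auto
      then have fP: "f \<in> A \<rightarrow>\<^sub>E (A \<rightarrow>\<^sub>E A)" and fz: "\<forall>b\<in>B. \<forall>w\<in>A. f b w = z \<and> f w b = z"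
        and im: "image2 f A = B"
        unfolding SS_def by auto
      have inB: "\<And>x y. x \<in> A \<Longrightarrow> y \<in> A \<Longrightarrow> f x y \<in> B"
        using im unfolding image2_def by force
      have "h \<in> D \<rightarrow>\<^sub>E B" unfolding h \<phi>_def D_def C_def using inB by auto
      moreover have "B - {z} \<subseteq> h ` D"
      proof
        fix b assume b: "b \<in> B - {z}"
        then obtain x y where xy: "x \<in> A" "y \<in> A" "b = f x y" using im unfolding image2_def by auto
        have "x \<notin> B" using fz xy b by auto
        moreover have "y \<notin> B" using fz xy b by auto
        ultimately have "(x,y) \<in> D" using xy unfolding D_def C_def by auto
        then show "b \<in> h ` D" unfolding h \<phi>_def using xy by force
      qed
      ultimately show "h \<in> T" unfolding T_def by auto
    qed
    show "\<psi> ` T \<subseteq> SS A B z"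
    proof
      fix f assume "f \<in> \<psi> ` T"
      then obtain g where g: "g \<in> T" and f: "f = \<psi> g" by auto
      then have gP: "g \<in> D \<rightarrow>\<^sub>E B" and cov: "B - {z} \<subseteq> g ` D" unfolding T_def by auto
      have gB: "\<And>x y. x \<in> C \<Longrightarrow> y \<in> C \<Longrightarrow> g (x,y) \<in> B" using gP unfolding D_def by auto
      have gA: "\<And>x y. x \<in> C \<Longrightarrow> y \<in> C \<Longrightarrow> g (x,y) \<in> A" using gB BA by blast
      have "f \<in> A \<rightarrow>\<^sub>E (A \<rightarrow>\<^sub>E A)" unfolding f \<psi>_def using gA zA by (simp add: restrict_PiE_iff)
      moreover have "image2 f A = B"
      proof
        show "image2 f A \<subseteq> B" unfolding image2_def f \<psi>_def using gB z by auto
        show "B \<subseteq> image2 f A"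
        proof
          fix b assume b: "b \<in> B"
          show "b \<in> image2 f A"
          proof (cases "b = z")
            case True
            have "z \<notin> C" using z unfolding C_def by auto
            then have "f z z = z" unfolding f \<psi>_def using zA by simp
            then show ?thesis using True zA unfolding image2_def by force
          next
            case False
            then obtain p where p: "p \<in> D" "b = g p" using cov b by auto
            then obtain x y where xy: "p = (x,y)" "x \<in> C" "y \<in> C" unfolding D_def by auto
            then have "f x y = b" unfolding f \<psi>_def C_def using p by auto
            moreover have "x \<in> A" "y \<in> A" using xy unfolding C_def by auto
            ultimately show ?thesis unfolding image2_def by force
          qed
        qed
      qed
      moreover have "\<forall>b\<in>B. \<forall>w\<in>A. f b w = z \<and> f w b = z"
        unfolding f \<psi>_def C_def using BA by auto
      ultimately show "f \<in> SS A B z" unfolding SS_def by auto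
    qed
  qed
  then show ?thesis unfolding T_def D_def C_def by (rule bij_betw_same_card)
qed


definition SSc :: "nat set \<Rightarrow> nat set \<Rightarrow> nat \<Rightarrow> (nat \<Rightarrow> nat \<Rightarrow> nat) set" where
  "SSc A B z = {f \<in> A \<rightarrow>\<^sub>E (A \<rightarrow>\<^sub>E A). image2 f A = B \<and> (\<forall>b\<in>B. \<forall>w\<in>A. f b w = z \<and> f w b = z)
      \<and> commutative_on A f}"

lemma cardSSc:
  assumes BA: "B \<subseteq> A" and z: "z \<in> B"
  shows "card (SSc A B z) = card {g \<in> {p \<in> (A-B)\<times>(A-B). fst p \<le> snd p} \<rightarrow>\<^sub>E B.
     B - {z} \<subseteq> g ` {p \<in> (A-B)\<times>(A-B). fst p \<le> snd p}}"
proof -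
  define C where "C = A - B"
  define D where "D = {p \<in> C \<times> C. fst p \<le> snd p}"
  define T where "T = {g \<in> D \<rightarrow>\<^sub>E B. B - {z} \<subseteq> g ` D}"
  define \<phi> where "\<phi> f = restrict (\<lambda>p. f (fst p) (snd p)) D" for f :: "nat \<Rightarrow> nat \<Rightarrow> nat"
  define \<psi> where "\<psi> g = (\<lambda>x\<in>A. \<lambda>y\<in>A. if x \<in> C \<and> y \<in> C then g (min x y, max x y) else z)" for g :: "nat \<times> nat \<Rightarrow> nat"
  have zA: "z \<in> A" using BA z by auto
  have "bij_betw \<phi> (SSc A B z) T"
  proof (rule bij_betw_byWitness[where f'=\<psi>])
    show "\<forall>f\<in>SSc A B z. \<psi> (\<phi> f) = f"
    proof
      fix f assume f: "f \<in> SSc A B z"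
      then have fP: "f \<in> A \<rightarrow>\<^sub>E (A \<rightarrow>\<^sub>E A)" and fz: "\<forall>b\<in>B. \<forall>w\<in>A. f b w = z \<and> f w b = z"
        and com: "\<forall>x\<in>A. \<forall>y\<in>A. f x y = f y x"
        unfolding SSc_def commutative_on_def by auto
      show "\<psi> (\<phi> f) = f"
      proof (rule ext)
        fix x show "\<psi> (\<phi> f) x = f x"
        proof (cases "x \<in> A")
          case False
          have "f x = undefined" using fP False by (rule PiE_arb)
          then show ?thesis using False unfolding \<psi>_def by simp
        next
          case True
          then have fx: "f x \<in> A \<rightarrow>\<^sub>E A" using fP by auto
          show ?thesis
          proof (rule ext)
            fix y show "\<psi> (\<phi> f) x y = f x y"
            proof (cases "y \<in> A")
              case False
              have "f x y = undefined" using fx False by (rule PiE_arb)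
              then show ?thesis using False True unfolding \<psi>_def by simp
            next
              case yA: True
              have "f (min x y) (max x y) = f x y" using com True yA
                by (cases "x \<le> y") (auto simp: min_def max_def)
              moreover have "min x y \<in> {x,y}" "max x y \<in> {x,y}" by (auto simp: min_def max_def)
              ultimately show ?thesis using True yA fz unfolding \<psi>_def \<phi>_def D_def C_def by auto
            qed
          qed
        qed
      qed
    qed
    show "\<forall>g\<in>T. \<phi> (\<psi> g) = g"
    proof
      fix g assume "g \<in> T"
      then have gP: "g \<in> D \<rightarrow>\<^sub>E B" unfolding T_def by auto
      show "\<phi> (\<psi> g) = g"
      proof (rule ext)
        fix p show "\<phi> (\<psi> g) p = g p"
        proof (cases "p \<in> D")
          case False
          have "g p = undefined" using gP False by (rule PiE_arb)
          then show ?thesis using False unfolding \<phi>_def by simp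
        next
          case True then show ?thesis unfolding \<phi>_def \<psi>_def D_def C_def
            by (auto simp: min_def max_def)
        qed
      qed
    qed
    show "\<phi> ` SSc A B z \<subseteq> T"
    proof
      fix h assume "h \<in> \<phi> ` SSc A B z"
      then obtain f where f: "f \<in> SSc A B z" and h: "h = \<phi> f" by auto
      then have fP: "f \<in> A \<rightarrow>\<^sub>E (A \<rightarrow>\<^sub>E A)" and fz: "\<forall>b\<in>B. \<forall>w\<in>A. f b w = z \<and> f w b = z"
        and im: "image2 f A = B" and com: "\<forall>x\<in>A. \<forall>y\<in>A. f x y = f y x"
        unfolding SSc_def commutative_on_def by auto
      have inB: "\<And>x y. x \<in> A \<Longrightarrow> y \<in> A \<Longrightarrow> f x y \<in> B"
        using im unfolding image2_def by force
      have "h \<in> D \<rightarrow>\<^sub>E B" unfolding h \<phi>_def D_def C_def using inB by auto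
      moreover have "B - {z} \<subseteq> h ` D"
      proof
        fix b assume b: "b \<in> B - {z}"
        then obtain x y where xy: "x \<in> A" "y \<in> A" "b = f x y" using im unfolding image2_def by auto
        have "x \<notin> B" using fz xy b by auto
        moreover have "y \<notin> B" using fz xy b by auto
        ultimately have C: "x \<in> C" "y \<in> C" using xy unfolding C_def by auto
        show "b \<in> h ` D"
        proof (cases "x \<le> y")
          case True
          then have "(x,y) \<in> D" using C unfolding D_def by auto
          then show ?thesis unfolding h \<phi>_def using xy by force
        next
          case False
          then have "(y,x) \<in> D" using C unfolding D_def by auto
          moreover have "b = f y x" using xy com by auto
          ultimately show ?thesis unfolding h \<phi>_def by force
        qed
      qed
      ultimately show "h \<in> T" unfolding T_def by auto
    qed
    show "\<psi> ` T \<subseteq> SSc A B z"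
    proof
      fix f assume "f \<in> \<psi> ` T"
      then obtain g where g: "g \<in> T" and f: "f = \<psi> g" by auto
      then have gP: "g \<in> D \<rightarrow>\<^sub>E B" and cov: "B - {z} \<subseteq> g ` D" unfolding T_def by auto
      have gB: "g (min x y, max x y) \<in> B" if xy: "x \<in> C" "y \<in> C" for x y
      proof -
        have "(min x y, max x y) \<in> D" using xy unfolding D_def by (auto simp: min_def max_def)
        then show ?thesis using gP by (auto simp: PiE_iff)
      qed
      have gA: "\<And>x y. x \<in> C \<Longrightarrow> y \<in> C \<Longrightarrow> g (min x y, max x y) \<in> A" using gB BA by blast
      have "f \<in> A \<rightarrow>\<^sub>E (A \<rightarrow>\<^sub>E A)" unfolding f \<psi>_def using gA zA by (simp add: restrict_PiE_iff)
      moreover have "image2 f A = B"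
      proof
        show "image2 f A \<subseteq> B" unfolding image2_def f \<psi>_def using gB z by auto
        show "B \<subseteq> image2 f A"
        proof
          fix b assume b: "b \<in> B"
          show "b \<in> image2 f A"
          proof (cases "b = z")
            case True
            have "z \<notin> C" using z unfolding C_def by auto
            then have "f z z = z" unfolding f \<psi>_def using zA by simp
            then show ?thesis using True zA unfolding image2_def by force
          next
            case False
            then obtain p where p: "p \<in> D" "b = g p" using cov b by auto
            then obtain x y where xy: "p = (x,y)" "x \<in> C" "y \<in> C" "x \<le> y" unfolding D_def by auto
            then have "f x y = b" unfolding f \<psi>_def C_def using p by (auto simp: min_def max_def)
            moreover have "x \<in> A" "y \<in> A" using xy unfolding C_def by auto
            ultimately show ?thesis unfolding image2_def by force
          qed
        qed
      qed
      moreover have "\<forall>b\<in>B. \<forall>w\<in>A. f b w = z \<and> f w b = z"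
        unfolding f \<psi>_def C_def using BA by auto
      moreover have "commutative_on A f"
        unfolding commutative_on_def f \<psi>_def by (auto simp: min.commute max.commute)
      ultimately show "f \<in> SSc A B z" unfolding SSc_def by auto
    qed
  qed
  then show ?thesis unfolding T_def D_def C_def by (rule bij_betw_same_card)
qed

lemma card_upper:
  assumes "finite C"
  shows "card {p \<in> C \<times> (C::nat set). fst p \<le> snd p} = card C * (card C + 1) div 2"
proof -
  define U1 where "U1 = {p \<in> C \<times> C. fst p \<le> snd p}"
  define U2 where "U2 = {p \<in> C \<times> C. snd p \<le> fst p}"
  have f1: "finite U1" "finite U2" unfolding U1_def U2_def using assms by auto
  have un: "U1 \<union> U2 = C \<times> C" unfolding U1_def U2_def by auto
  have int: "U1 \<inter> U2 = (\<lambda>x. (x,x)) ` C" unfolding U1_def U2_def by auto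
  have cint: "card (U1 \<inter> U2) = card C" unfolding int by (rule card_image) (auto simp: inj_on_def)
  have "U2 = (\<lambda>p. (snd p, fst p)) ` U1" unfolding U1_def U2_def by force
  moreover have "inj_on (\<lambda>p. (snd p, fst p)) U1" by (auto simp: inj_on_def)
  ultimately have c2: "card U2 = card U1" using card_image by metis
  have "card (U1 \<union> U2) + card (U1 \<inter> U2) = card U1 + card U2"
    using card_Un_Int[OF f1] by simp
  then have "card C * card C + card C = 2 * card U1" using un cint c2 assms by (simp add: card_cartesian_product)
  then show ?thesis unfolding U1_def by (simp add: algebra_simps)
qed


lemma ineq_a:
  assumes m2: "2 \<le> m" and mn: "m \<le> n" and am: "a_bound n < int m"
  shows "(n - m)^2 < m - 1"
proof -
  define k where "k = n - m"
  have nk: "n = m + k" unfolding k_def using mn by simp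
  have "real n + 1/2 - sqrt (real n - 3/4) < real m"
    using am unfolding a_bound_def floor_less_iff by simp
  then have s: "real k + 1/2 < sqrt (real n - 3/4)" unfolding nk by simp
  have pos: "real n - 3/4 \<ge> 0" using m2 mn by simp
  have "(real k + 1/2)^2 < (sqrt (real n - 3/4))^2"
    by (rule power_strict_mono[OF s]) auto
  then have "(real k + 1/2)^2 < real n - 3/4" using pos by simp
  then have "real (k*k + k + 1) < real n" by (simp add: power2_eq_square algebra_simps)
  then have "k*k + k + 1 < n" by linarith
  then show ?thesis unfolding k_def[symmetric] nk by (simp add: power2_eq_square)
qed

lemma ineq_c:
  assumes m2: "2 \<le> m" and mn: "m \<le> n" and am: "c_bound n < int m"
  shows "(n - m) * (n - m + 1) div 2 < m - 1"
proof -
  define k where "k = n - m"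
  have nk: "n = m + k" unfolding k_def using mn by simp
  have "real n + 3/2 - sqrt (2 * real n + 1/4) < real m"
    using am unfolding c_bound_def floor_less_iff by simp
  then have s: "real k + 3/2 < sqrt (2 * real n + 1/4)" unfolding nk by simp
  have pos: "2 * real n + 1/4 \<ge> 0" by simp
  have "(real k + 3/2)^2 < (sqrt (2 * real n + 1/4))^2"
    by (rule power_strict_mono[OF s]) auto
  then have "(real k + 3/2)^2 < 2 * real n + 1/4" using pos by simp
  then have "real (k*k + 3*k + 2) < real (2*n)" by (simp add: power2_eq_square algebra_simps)
  then have "k*k + 3*k + 2 < 2*n" by linarith
  then have "k * (k+1) < 2 * (m - 1)" using nk m2 by (simp add: algebra_simps)
  then show ?thesis unfolding k_def[symmetric] by linarith
qed

lemma Phi_zero: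
  assumes "1 \<le> m" "K < m - 1"
  shows "Phi (int m) (m - 1) K = 0"
proof -
  have E0: "int (card {g \<in> {..<K} \<rightarrow>\<^sub>E {..<m}. {1..<m} \<subseteq> g ` {..<K}}) = Phi (int (card {..<m})) (card {1..<m}) (card {..<K})"
    by (rule count_cover) auto
  have E: "{g \<in> {..<K} \<rightarrow>\<^sub>E {..<m}. {1..<m} \<subseteq> g ` {..<K}} = {}"
  proof (rule ccontr)
    assume "\<not> ?thesis"
    then obtain g where "{1..<m} \<subseteq> g ` {..<K}" by auto
    then have "card {1..<m} \<le> card (g ` {..<K})" by (intro card_mono) auto
    also have "\<dots> \<le> K" using card_image_le[of "{..<K}" g] by simp
    finally show False using assms by simp
  qed
  from E0[unfolded E] show ?thesis by simp
qed

lemma inner_conv: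
  assumes "1 \<le> m"
  shows "(\<Sum>i=0..int m - 1. (-1)^nat i * int ((nat (int m) - 1) choose nat i) * (int m - i) ^ K)
     = Phi (int m) (m - 1) K"
proof -
  have "{0..int m - 1} = int ` {..m - 1}" using assms
    by (auto simp: image_iff intro!: bexI[where x="nat _"]) 
  then have "(\<Sum>i=0..int m - 1. (-1)^nat i * int ((nat (int m) - 1) choose nat i) * (int m - i) ^ K)
     = (\<Sum>i\<in>{..m-1}. (-1)^i * int ((m - 1) choose i) * (int m - int i) ^ K)"
    by (simp add: sum.reindex)
  then show ?thesis unfolding Phi_def by simp
qed

lemma outer_conv:
  fixes R :: "int \<Rightarrow> int" and a :: int
  assumes z1: "\<And>m. m > int n \<Longrightarrow> R m = 0"
    and z2: "\<And>m. 2 \<le> m \<Longrightarrow> m \<le> int n \<Longrightarrow> a < m \<Longrightarrow> R m = 0"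
  shows "(\<Sum>m\<in>{2..a}. R m) = (\<Sum>m\<in>{2..n}. R (int m))"
proof -
  have "(\<Sum>m\<in>{2..a}. R m) = (\<Sum>m\<in>{2..max a (int n)}. R m)"
  proof (rule sum.mono_neutral_left)
    show "\<forall>i\<in>{2..max a (int n)} - {2..a}. R i = 0"
    proof
      fix i assume i: "i \<in> {2..max a (int n)} - {2..a}"
      show "R i = 0"
      proof (cases "i \<le> int n")
        case True then show ?thesis using i by (intro z2) auto
      next
        case False then show ?thesis by (intro z1) auto
      qed
    qed
  qed auto
  also have "\<dots> = (\<Sum>m\<in>{2..int n}. R m)"
    by (rule sum.mono_neutral_right) (auto intro: z1 z2)
  also have "{2..int n} = int ` {2..n}"
  proof
    show "{2..int n} \<subseteq> int ` {2..n}"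
    proof
      fix x assume x: "x \<in> {2..int n}"
      show "x \<in> int ` {2..n}" by (rule image_eqI[where x="nat x"]) (use x in auto)
    qed
  qed auto
  also have "(\<Sum>m\<in>int ` {2..n}. R m) = (\<Sum>m\<in>{2..n}. R (int m))"
    by (simp add: sum.reindex)
  finally show ?thesis .
qed


lemma group_card:
  fixes H :: "nat \<Rightarrow> int"
  shows "(\<Sum>B\<in>{B. B \<subseteq> {1..n} \<and> 2 \<le> card B}. H (card B)) = (\<Sum>m\<in>{2..n}. int (n choose m) * H m)"
proof -
  let ?P = "{B. B \<subseteq> {1..n} \<and> 2 \<le> card B}"
  have fin: "finite ?P" by auto
  have im: "card ` ?P \<subseteq> {2..n}"
  proof
    fix m assume "m \<in> card ` ?P"
    then obtain B where B: "B \<subseteq> {1..n}" "2 \<le> card B" "m = card B" by auto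
    have "card B \<le> card {1..n}" using B by (intro card_mono) auto
    then show "m \<in> {2..n}" using B by simp
  qed
  have "(\<Sum>B\<in>?P. H (card B)) = (\<Sum>m\<in>{2..n}. \<Sum>B\<in>{B \<in> ?P. card B = m}. H (card B))"
    using sum.group[OF fin _ im, of "\<lambda>B. H (card B)"] by simp
  also have "\<dots> = (\<Sum>m\<in>{2..n}. int (n choose m) * H m)"
  proof (rule sum.cong[OF refl])
    fix m assume m: "m \<in> {2..n}"
    have eq: "{B \<in> ?P. card B = m} = {B. B \<subseteq> {1..n} \<and> card B = m}" using m by auto
    have "(\<Sum>B\<in>{B \<in> ?P. card B = m}. H (card B)) = (\<Sum>B\<in>{B. B \<subseteq> {1..n} \<and> card B = m}. H m)"
      unfolding eq by (rule sum.cong) auto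
    also have "\<dots> = int (card {B. B \<subseteq> {1..n} \<and> card B = m}) * H m" by simp
    also have "card {B. B \<subseteq> {1..n} \<and> card B = m} = n choose m" using n_subsets[of "{1..n}" m] by simp
    finally show "(\<Sum>B\<in>{B \<in> ?P. card B = m}. H (card B)) = int (n choose m) * H m" .
  qed
  finally show ?thesis .
qed

lemma finP': "finite {B. B \<subseteq> {1..n::nat} \<and> 2 \<le> card B}"
  by (rule finite_subset[of _ "Pow {1..n}"]) auto

lemma finB: "B \<subseteq> {1..n::nat} \<Longrightarrow> finite B"
  using finite_atLeastAtMost by (rule rev_finite_subset)

lemma sum_pairs:
  fixes h :: "nat set \<Rightarrow> int"
  shows "(\<Sum>p\<in>Sigma {B. B \<subseteq> {1..n} \<and> 2 \<le> card B} (\<lambda>B. B). h (fst p))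
     = (\<Sum>B\<in>{B. B \<subseteq> {1..n} \<and> 2 \<le> card B}. int (card B) * h B)"
proof -
  have "(\<Sum>B\<in>{B. B \<subseteq> {1..n} \<and> 2 \<le> card B}. \<Sum>z\<in>B. h B)
     = (\<Sum>(B,z)\<in>Sigma {B. B \<subseteq> {1..n} \<and> 2 \<le> card B} (\<lambda>B. B). h B)"
    by (rule sum.Sigma) (use finP' finB in auto)
  then show ?thesis by (simp add: case_prod_beta)
qed

lemma card_fibers:
  fixes G :: "'a set" and key :: "'a \<Rightarrow> 'b" and P :: "'b set"
  assumes "finite G" "finite P" "key ` G \<subseteq> P"
  shows "card G = (\<Sum>p\<in>P. card {f \<in> G. key f = p})"
  using sum.group[OF assms, of "\<lambda>_. 1::nat"] by simp

lemma tables_fin: "finite (tables n)"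
  unfolding tables_def by (intro finite_PiE) auto

lemma key_in:
  assumes f: "f \<in> tables n" and c: "2 \<le> card (image2 f {1..n})"
  shows "image2 f {1..n} \<subseteq> {1..n}" "1 \<in> {1..n}" "f (f 1 1) 1 \<in> image2 f {1..n}"
proof -
  show s: "image2 f {1..n} \<subseteq> {1..n}" using image2_sub[OF f] .
  have "card (image2 f {1..n}) \<le> card {1..n}" using s by (intro card_mono) auto
  then show one: "1 \<in> {1..n}" using c by auto
  have "f 1 1 \<in> {1..n}" using tables_closed[OF f one one] .
  then show "f (f 1 1) 1 \<in> image2 f {1..n}" unfolding image2_def using one by force
qed

lemma fiber:
  assumes B: "B \<subseteq> {1..n}" "2 \<le> card B" and z: "z \<in> B"
  shows "{f \<in> {f \<in> tables n. nilpotent_degree {1..n} f 3}. (image2 f {1..n}, f (f 1 1) 1) = (B, z)}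
     = SS {1..n} B z"
proof
  show "{f \<in> {f \<in> tables n. nilpotent_degree {1..n} f 3}. (image2 f {1..n}, f (f 1 1) 1) = (B, z)}
     \<subseteq> SS {1..n} B z"
  proof
    fix f assume f: "f \<in> {f \<in> {f \<in> tables n. nilpotent_degree {1..n} f 3}. (image2 f {1..n}, f (f 1 1) 1) = (B, z)}"
    then have ft: "f \<in> tables n" and nd: "nilpotent_degree {1..n} f 3" and im: "image2 f {1..n} = B"
      and zz: "f (f 1 1) 1 = z" by auto
    have "\<forall>b\<in>B. \<forall>w\<in>{1..n}. f b w = z \<and> f w b = z" using nd char[OF ft] im zz by simp
    then show "f \<in> SS {1..n} B z" using ft im unfolding SS_def tables_def by simp
  qed
next
  show "SS {1..n} B z \<subseteq> {f \<in> {f \<in> tables n. nilpotent_degree {1..n} f 3}. (image2 f {1..n}, f (f 1 1) 1) = (B, z)}"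
  proof
    fix f assume f: "f \<in> SS {1..n} B z"
    then have ft: "f \<in> tables n" and im: "image2 f {1..n} = B" and Z: "\<forall>b\<in>B. \<forall>w\<in>{1..n}. f b w = z \<and> f w b = z"
      unfolding SS_def tables_def by auto
    have c: "2 \<le> card (image2 f {1..n})" using im B by simp
    have k: "1 \<in> {1..n}" using key_in[OF ft c] by blast
    have "f 1 1 \<in> image2 f {1..n}" unfolding image2_def using k(1) by (intro image_eqI[where x="(1,1)"]) auto
    then have "f 1 1 \<in> B" using im by simp
    then have zz: "f (f 1 1) 1 = z" using Z k(1) by auto
    have "2 \<le> card (image2 f {1..n}) \<and> (\<forall>b\<in>image2 f {1..n}. \<forall>w\<in>{1..n}. f b w = f (f 1 1) 1 \<and> f w b = f (f 1 1) 1)"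
      unfolding zz im using B Z by blast
    then have nd: "nilpotent_degree {1..n} f 3" using char[OF ft] by blast
    show "f \<in> {f \<in> {f \<in> tables n. nilpotent_degree {1..n} f 3}. (image2 f {1..n}, f (f 1 1) 1) = (B, z)}"
      using ft im zz nd by blast
  qed
qed

lemma count_main:
  "int (card {f \<in> tables n. nilpotent_degree {1..n} f 3})
     = (\<Sum>m\<in>{2..n}. int (n choose m) * (int m * Phi (int m) (m - 1) ((n - m)^2)))"
proof -
  let ?G = "{f \<in> tables n. nilpotent_degree {1..n} f 3}"
  let ?P' = "{B. B \<subseteq> {1..n} \<and> 2 \<le> card B}"
  let ?P = "Sigma ?P' (\<lambda>B. B)"
  let ?key = "\<lambda>f. (image2 f {1..n}, f (f 1 1) 1)"
  have finG: "finite ?G" using tables_fin by auto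
  have finP: "finite ?P" by (rule finite_SigmaI) (use finP' finB in auto)
  have keyP: "?key ` ?G \<subseteq> ?P"
  proof
    fix p assume "p \<in> ?key ` ?G"
    then obtain f where f: "f \<in> tables n" "nilpotent_degree {1..n} f 3" "p = ?key f" by auto
    have c: "2 \<le> card (image2 f {1..n})" using char[OF f(1)] f(2) by simp
    show "p \<in> ?P" using key_in[OF f(1) c] c f(3) by auto
  qed
  have "card ?G = (\<Sum>p\<in>?P. card {f \<in> ?G. ?key f = p})" by (rule card_fibers[OF finG finP keyP])
  then have "int (card ?G) = (\<Sum>p\<in>?P. int (card {f \<in> ?G. ?key f = p}))" by simp
  also have "\<dots> = (\<Sum>p\<in>?P. Phi (int (card (fst p))) (card (fst p) - 1) ((n - card (fst p))^2))"
  proof (rule sum.cong[OF refl])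
    fix p assume p: "p \<in> ?P"
    then obtain B z where pz: "p = (B,z)" and B: "B \<subseteq> {1..n}" "2 \<le> card B" and z: "z \<in> B" by auto
    have finB: "finite B" using B(1) by (rule finB)
    have "{f \<in> ?G. ?key f = p} = SS {1..n} B z" unfolding pz by (rule fiber[OF B z])
    then have "card {f \<in> ?G. ?key f = p} = card {g \<in> (({1..n}-B)\<times>({1..n}-B)) \<rightarrow>\<^sub>E B. B - {z} \<subseteq> g ` (({1..n}-B)\<times>({1..n}-B))}"
      using cardSS[OF B(1) z] by simp
    then have "int (card {f \<in> ?G. ?key f = p}) = Phi (int (card B)) (card (B - {z})) (card (({1..n}-B)\<times>({1..n}-B)))"
      using count_cover[of "B - {z}" "({1..n}-B)\<times>({1..n}-B)" B] finB by simp
    also have "card (B - {z}) = card B - 1" using z finB by simp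
    also have "card (({1..n}-B)\<times>({1..n}-B)) = (n - card B)^2"
      using B finB by (simp add: card_cartesian_product card_Diff_subset power2_eq_square)
    finally show "int (card {f \<in> ?G. ?key f = p}) = Phi (int (card (fst p))) (card (fst p) - 1) ((n - card (fst p))^2)"
      unfolding pz by simp
  qed
  also have "\<dots> = (\<Sum>B\<in>?P'. int (card B) * Phi (int (card B)) (card B - 1) ((n - card B)^2))"
    by (rule sum_pairs)
  also have "\<dots> = (\<Sum>m\<in>{2..n}. int (n choose m) * (int m * Phi (int m) (m - 1) ((n - m)^2)))"
    by (rule group_card[where H="\<lambda>m. int m * Phi (int m) (m - 1) ((n - m)^2)"])
  finally show ?thesis .
qed


lemma fiber_c:
  assumes B: "B \<subseteq> {1..n}" "2 \<le> card B" and z: "z \<in> B"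
  shows "{f \<in> {f \<in> tables n. nilpotent_degree {1..n} f 3 \<and> commutative_on {1..n} f}. (image2 f {1..n}, f (f 1 1) 1) = (B, z)}
     = SSc {1..n} B z"
proof -
  have "{f \<in> {f \<in> tables n. nilpotent_degree {1..n} f 3 \<and> commutative_on {1..n} f}. (image2 f {1..n}, f (f 1 1) 1) = (B, z)}
     = {f \<in> {f \<in> tables n. nilpotent_degree {1..n} f 3}. (image2 f {1..n}, f (f 1 1) 1) = (B, z)} \<inter> {f. commutative_on {1..n} f}"
    by blast
  also have "\<dots> = SS {1..n} B z \<inter> {f. commutative_on {1..n} f}" unfolding fiber[OF B z] ..
  also have "\<dots> = SSc {1..n} B z" unfolding SS_def SSc_def by blast
  finally show ?thesis .
qed

lemma count_comm:
  "int (card {f \<in> tables n. nilpotent_degree {1..n} f 3 \<and> commutative_on {1..n} f})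
     = (\<Sum>m\<in>{2..n}. int (n choose m) * (int m * Phi (int m) (m - 1) ((n - m) * (n - m + 1) div 2)))"
proof -
  let ?G = "{f \<in> tables n. nilpotent_degree {1..n} f 3 \<and> commutative_on {1..n} f}"
  let ?P' = "{B. B \<subseteq> {1..n} \<and> 2 \<le> card B}"
  let ?P = "Sigma ?P' (\<lambda>B. B)"
  let ?key = "\<lambda>f. (image2 f {1..n}, f (f 1 1) 1)"
  have finG: "finite ?G" using tables_fin by auto
  have finP: "finite ?P" by (rule finite_SigmaI) (use finP' finB in auto)
  have keyP: "?key ` ?G \<subseteq> ?P"
  proof
    fix p assume "p \<in> ?key ` ?G"
    then obtain f where f: "f \<in> tables n" "nilpotent_degree {1..n} f 3" "p = ?key f" by auto
    have c: "2 \<le> card (image2 f {1..n})" using char[OF f(1)] f(2) by simp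
    show "p \<in> ?P" using key_in[OF f(1) c] c f(3) by auto
  qed
  have "card ?G = (\<Sum>p\<in>?P. card {f \<in> ?G. ?key f = p})" by (rule card_fibers[OF finG finP keyP])
  then have "int (card ?G) = (\<Sum>p\<in>?P. int (card {f \<in> ?G. ?key f = p}))" by simp
  also have "\<dots> = (\<Sum>p\<in>?P. Phi (int (card (fst p))) (card (fst p) - 1) ((n - card (fst p)) * (n - card (fst p) + 1) div 2))"
  proof (rule sum.cong[OF refl])
    fix p assume p: "p \<in> ?P"
    then obtain B z where pz: "p = (B,z)" and B: "B \<subseteq> {1..n}" "2 \<le> card B" and z: "z \<in> B" by auto
    have finB: "finite B" using B(1) by (rule finB)
    define U where "U = {p \<in> ({1..n}-B)\<times>({1..n}-B). fst p \<le> snd p}"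
    have "{f \<in> ?G. ?key f = p} = SSc {1..n} B z" unfolding pz by (rule fiber_c[OF B z])
    then have "card {f \<in> ?G. ?key f = p} = card {g \<in> U \<rightarrow>\<^sub>E B. B - {z} \<subseteq> g ` U}"
      using cardSSc[OF B(1) z] unfolding U_def by simp
    moreover have "finite U" unfolding U_def by auto
    ultimately have "int (card {f \<in> ?G. ?key f = p}) = Phi (int (card B)) (card (B - {z})) (card U)"
      using count_cover[of "B - {z}" U B] finB by simp
    also have "card (B - {z}) = card B - 1" using z finB by simp
    also have "card U = card ({1..n}-B) * (card ({1..n}-B) + 1) div 2" unfolding U_def
      by (rule card_upper) auto
    also have "card ({1..n}-B) = n - card B"
      using B finB by (simp add: card_Diff_subset)
    finally show "int (card {f \<in> ?G. ?key f = p}) = Phi (int (card (fst p))) (card (fst p) - 1) ((n - card (fst p)) * (n - card (fst p) + 1) div 2)"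
      unfolding pz by simp
  qed
  also have "\<dots> = (\<Sum>B\<in>?P'. int (card B) * Phi (int (card B)) (card B - 1) ((n - card B) * (n - card B + 1) div 2))"
    by (rule sum_pairs)
  also have "\<dots> = (\<Sum>m\<in>{2..n}. int (n choose m) * (int m * Phi (int m) (m - 1) ((n - m) * (n - m + 1) div 2)))"
    by (rule group_card[where H="\<lambda>m. int m * Phi (int m) (m - 1) ((n - m) * (n - m + 1) div 2)"])
  finally show ?thesis .
qed

theorem theorem2p1:
  fixes n :: nat
  shows "(int (card {f \<in> tables n. nilpotent_degree {1..n} f 3}) =
           (\<Sum>m\<in>{2..a_bound n}. int (n choose nat m) * m *
              (\<Sum>i=0..m-1. (-1)^nat i * int ((nat m - 1) choose nat i) * (m - i) ^ ((n - nat m)^2)))) \<and>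
         int (card {f \<in> tables n. nilpotent_degree {1..n} f 3 \<and> commutative_on {1..n} f}) =
           (\<Sum>m\<in>{2..c_bound n}. int (n choose nat m) * m *
              (\<Sum>i=0..m-1. (-1)^nat i * int ((nat m - 1) choose nat i) *
                 (m - i) ^ ((n - nat m) * (n - nat m + 1) div 2)))"
proof
  define R where "R m = int (n choose nat m) * m *
              (\<Sum>i=0..m-1. (-1)^nat i * int ((nat m - 1) choose nat i) * (m - i) ^ ((n - nat m)^2))" for m :: int
  have "(\<Sum>m\<in>{2..a_bound n}. R m) = (\<Sum>m\<in>{2..n}. R (int m))"
  proof (rule outer_conv)
    fix m :: int assume "m > int n"
    then have "n choose nat m = 0" by simp
    then show "R m = 0" unfolding R_def by simp
  next
    fix m :: int assume m: "2 \<le> m" "m \<le> int n" "a_bound n < m"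
    define m' where "m' = nat m"
    have mm: "m = int m'" using m unfolding m'_def by simp
    have "(n - m')^2 < m' - 1" using ineq_a[of m' n] m mm by simp
    then have "Phi (int m') (m' - 1) ((n - m')^2) = 0" using m mm by (intro Phi_zero) auto
    then show "R m = 0" unfolding R_def mm using inner_conv[of m' "(n - m')^2"] m mm by simp
  qed
  also have "\<dots> = (\<Sum>m\<in>{2..n}. int (n choose m) * (int m * Phi (int m) (m - 1) ((n - m)^2)))"
  proof (rule sum.cong[OF refl])
    fix m assume "m \<in> {2..n}"
    then show "R (int m) = int (n choose m) * (int m * Phi (int m) (m - 1) ((n - m)^2))"
      unfolding R_def using inner_conv[of m "(n - m)^2"] by simp
  qed
  finally show "int (card {f \<in> tables n. nilpotent_degree {1..n} f 3}) =
           (\<Sum>m\<in>{2..a_bound n}. int (n choose nat m) * m *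
              (\<Sum>i=0..m-1. (-1)^nat i * int ((nat m - 1) choose nat i) * (m - i) ^ ((n - nat m)^2)))"
    unfolding R_def count_main by simp
next
  define R where "R m = int (n choose nat m) * m *
              (\<Sum>i=0..m-1. (-1)^nat i * int ((nat m - 1) choose nat i) *
                 (m - i) ^ ((n - nat m) * (n - nat m + 1) div 2))" for m :: int
  have "(\<Sum>m\<in>{2..c_bound n}. R m) = (\<Sum>m\<in>{2..n}. R (int m))"
  proof (rule outer_conv)
    fix m :: int assume "m > int n"
    then have "n choose nat m = 0" by simp
    then show "R m = 0" unfolding R_def by simp
  next
    fix m :: int assume m: "2 \<le> m" "m \<le> int n" "c_bound n < m"
    define m' where "m' = nat m"
    have mm: "m = int m'" using m unfolding m'_def by simp
    have "(n - m') * (n - m' + 1) div 2 < m' - 1" using ineq_c[of m' n] m mm by simp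
    then have "Phi (int m') (m' - 1) ((n - m') * (n - m' + 1) div 2) = 0" using m mm by (intro Phi_zero) auto
    then show "R m = 0" unfolding R_def mm using inner_conv[of m' "(n - m') * (n - m' + 1) div 2"] m mm by simp
  qed
  also have "\<dots> = (\<Sum>m\<in>{2..n}. int (n choose m) * (int m * Phi (int m) (m - 1) ((n - m) * (n - m + 1) div 2)))"
  proof (rule sum.cong[OF refl])
    fix m assume "m \<in> {2..n}"
    then show "R (int m) = int (n choose m) * (int m * Phi (int m) (m - 1) ((n - m) * (n - m + 1) div 2))"
      unfolding R_def using inner_conv[of m "(n - m) * (n - m + 1) div 2"] by simp
  qed
  finally show "int (card {f \<in> tables n. nilpotent_degree {1..n} f 3 \<and> commutative_on {1..n} f}) =
           (\<Sum>m\<in>{2..c_bound n}. int (n choose nat m) * m *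
              (\<Sum>i=0..m-1. (-1)^nat i * int ((nat m - 1) choose nat i) *
                 (m - i) ^ ((n - nat m) * (n - nat m + 1) div 2)))"
    unfolding R_def count_comm by simp
qed

end
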